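(* Let $n,m\ge1$ and $P\in\mathbb{C}[x_1,\dots,x_n]$. Then $P$ is invariant under the quasi-symmetrizing action of $G_{n,m}$ (i.e. $g\bullet P=P$ for all $g\in G_{n,m}$) if and only if there exists a quasi-symmetric polynomial $Q\in\mathbb{C}[x_1,\dots,x_n]$ such that $P(x_1,\dots,x_n)=Q(x_1^m,\dots,x_n^m)$.
   Context: $G_{n,m}$ is the group of $n\times n$ matrices having exactly one non-zero entry in each row and each column, these entries being $m$-th roots of unity. For $g\in G_{n,m}$, $w(g)$ is the product of its non-zero entries, $|g|$ the permutation matrix of entrywise moduli, and $\sigma_g$ the permutation with $(x_1,\dots,x_n)\cdot{}^t|g|=(x_{\sigma_g(1)},\dots,x_{\sigma_g(n)})$. The quasi-symmetrizing action is linear and defined on monomials by: for $a_1<\dots<a_l$ and positive integers $K=(k_1,\dots,k_l)$, $g\bullet(x_{a_1}^{k_1}\cdots x_{a_l}^{k_l})=w(g)^{c(K)}x_{b_1}^{k_1}\cdots x_{b_l}^{k_l}$, where $b_1<\dots<b_l$ is the increasing rearrangement of $\sigma_g(a_1),\dots,\sigma_g(a_l)$, and $c(K)=0$ if all $k_i$ are divisible by $m$, $c(K)=1$ otherwise. For $\nu\in\mathbb{N}^n$, let $c(\nu)$ be the composition obtained by deleting the zero entries of $\nu$; a polynomial $Q$ is quasi-symmetric if the coefficients of $x^\nu$ and $x^\mu$ in $Q$ are equal whenever $c(\nu)=c(\mu)$. *)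

theory Defs
  imports Complex_Main
begin

text \<open>Polynomials in C[x_1,...,x_n] are represented by their coefficient functions:
  an exponent vector is a list of naturals of length n (index i stands for x_(i+1)),
  and a polynomial is a finitely supported function from exponent vectors of length n
  to complex numbers.\<close>

definition is_poly :: "nat \<Rightarrow> (nat list \<Rightarrow> complex) \<Rightarrow> bool" where
  "is_poly n P \<longleftrightarrow> finite {\<nu>. P \<nu> \<noteq> 0} \<and> (\<forall>\<nu>. P \<nu> \<noteq> 0 \<longrightarrow> length \<nu> = n)"

definition comp_of :: "nat list \<Rightarrow> nat list" where
  "comp_of \<nu> = filter (\<lambda>k. k \<noteq> 0) \<nu>"

definition quasi_symmetric :: "nat \<Rightarrow> (nat list \<Rightarrow> complex) \<Rightarrow> bool" where
  "quasi_symmetric n Q \<longleftrightarrow>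
     (\<forall>\<nu> \<mu>. length \<nu> = n \<longrightarrow> length \<mu> = n \<longrightarrow> comp_of \<nu> = comp_of \<mu> \<longrightarrow> Q \<nu> = Q \<mu>)"

definition in_G :: "nat \<Rightarrow> nat \<Rightarrow> (nat \<Rightarrow> nat \<Rightarrow> complex) \<Rightarrow> bool" where
  "in_G n m g \<longleftrightarrow>
     (\<forall>i j. (i \<ge> n \<or> j \<ge> n) \<longrightarrow> g i j = 0) \<and>
     (\<forall>i<n. \<exists>!j. j < n \<and> g i j \<noteq> 0) \<and>
     (\<forall>j<n. \<exists>!i. i < n \<and> g i j \<noteq> 0) \<and>
     (\<forall>i<n. \<forall>j<n. g i j \<noteq> 0 \<longrightarrow> g i j ^ m = 1)"

text \<open>sigma_g: (x_1..x_n) * transpose |g| = (x_sigma(1), ..., x_sigma(n)),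
  i.e. sigma_g(i) is the column of the nonzero entry of row i.\<close>
definition sigma_g :: "nat \<Rightarrow> (nat \<Rightarrow> nat \<Rightarrow> complex) \<Rightarrow> nat \<Rightarrow> nat" where
  "sigma_g n g i = (THE j. j < n \<and> g i j \<noteq> 0)"

definition w_g :: "nat \<Rightarrow> (nat \<Rightarrow> nat \<Rightarrow> complex) \<Rightarrow> complex" where
  "w_g n g = (\<Prod>i<n. g i (sigma_g n g i))"

text \<open>Exponent transport: x_{a_1}^{k_1}...x_{a_l}^{k_l} (a increasing) goes to
  x_{b_1}^{k_1}...x_{b_l}^{k_l}, b the increasing rearrangement of sigma(a_1),...,sigma(a_l).
  Position j of the result is nonzero iff j is in B = sigma(support), and then it carries
  the r-th entry of the composition, where r = number of elements of B below j.\<close>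
definition transport :: "nat \<Rightarrow> (nat \<Rightarrow> nat) \<Rightarrow> nat list \<Rightarrow> nat list" where
  "transport n \<sigma> \<nu> =
     (let B = \<sigma> ` {i. i < n \<and> \<nu> ! i \<noteq> 0}
      in map (\<lambda>j. if j \<in> B then comp_of \<nu> ! card {j' \<in> B. j' < j} else 0) [0..<n])"

definition cK :: "nat \<Rightarrow> nat list \<Rightarrow> nat" where
  "cK m \<nu> = (if \<forall>k \<in> set (comp_of \<nu>). m dvd k then 0 else 1)"

definition qs_action :: "nat \<Rightarrow> nat \<Rightarrow> (nat \<Rightarrow> nat \<Rightarrow> complex) \<Rightarrow> (nat list \<Rightarrow> complex)
    \<Rightarrow> (nat list \<Rightarrow> complex)" where
  "qs_action n m g P = (\<lambda>\<mu>. \<Sum>\<nu> \<in> {\<nu>. P \<nu> \<noteq> 0}.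
       if transport n (sigma_g n g) \<nu> = \<mu> then w_g n g ^ cK m \<nu> * P \<nu> else 0)"

text \<open>P(x_1,...,x_n) = Q(x_1^m,...,x_n^m), in terms of coefficients.\<close>
definition subst_pow :: "nat \<Rightarrow> nat \<Rightarrow> (nat list \<Rightarrow> complex) \<Rightarrow> (nat list \<Rightarrow> complex) \<Rightarrow> bool" where
  "subst_pow n m P Q \<longleftrightarrow>
     (\<forall>\<nu>. length \<nu> = n \<longrightarrow>
        P \<nu> = (if \<forall>k \<in> set \<nu>. m dvd k then Q (map (\<lambda>k. k div m) \<nu>) else 0))"

end

theory Submission
  imports Defs
begin

lemma rank_enum:
  "map (\<lambda>j. card {j'\<in>B. j'<j}) (filter (\<lambda>j. j\<in>B) [0..<n]) = [0..<card {j\<in>B. j<n}]"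
proof (induction n)
  case 0 then show ?case by simp
next
  case (Suc n)
  show ?case
  proof (cases "n \<in> B")
    case True
    have e: "{j\<in>B. j<Suc n} = insert n {j\<in>B. j<n}" using True by auto
    have "card {j\<in>B. j<Suc n} = Suc (card {j\<in>B. j<n})" unfolding e
      by (subst card_insert_disjoint) auto
    then show ?thesis using Suc True by simp
  next
    case False
    have e: "{j\<in>B. j<Suc n} = {j\<in>B. j<n}" using False less_Suc_eq by auto
    then show ?thesis using Suc False by simp
  qed
qed

definition supp :: "nat \<Rightarrow> nat list \<Rightarrow> nat set" where
  "supp n \<nu> = {i. i < n \<and> \<nu> ! i \<noteq> 0}"

lemma len_comp: "length (comp_of \<nu>) = card (supp (length \<nu>) \<nu>)"
  unfolding comp_of_def supp_def by (simp add: length_filter_conv_card)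

lemma comp_nz: "k \<in> set (comp_of \<nu>) \<Longrightarrow> k \<noteq> 0"
  unfolding comp_of_def by auto

lemma transport_len[simp]: "length (transport n \<sigma> \<nu>) = n"
  unfolding transport_def Let_def by simp

context
  fixes n \<sigma> \<nu>
  assumes len: "length \<nu> = n" and inj: "inj_on \<sigma> (supp n \<nu>)"
    and into: "\<sigma> ` supp n \<nu> \<subseteq> {..<n}"
begin

private lemma cardB: "card (\<sigma> ` supp n \<nu>) = length (comp_of \<nu>)"
  using inj len by (simp add: card_image len_comp)

private lemma rank_lt: "j \<in> \<sigma> ` supp n \<nu> \<Longrightarrow> card {j'\<in>\<sigma> ` supp n \<nu>. j'<j} < length (comp_of \<nu>)"
proof -
  assume j: "j \<in> \<sigma> ` supp n \<nu>"
  have fin: "finite (\<sigma> ` supp n \<nu>)" using into finite_subset by blast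
  have "{j'\<in>\<sigma> ` supp n \<nu>. j'<j} \<subset> \<sigma> ` supp n \<nu>" using j by auto
  then have "card {j'\<in>\<sigma> ` supp n \<nu>. j'<j} < card (\<sigma> ` supp n \<nu>)"
    using fin psubset_card_mono by blast
  then show ?thesis using cardB by simp
qed

lemma transport_supp: "supp n (transport n \<sigma> \<nu>) = \<sigma> ` supp n \<nu>"
proof -
  let ?B = "\<sigma> ` supp n \<nu>" and ?c = "comp_of \<nu>"
  let ?f = "\<lambda>j. if j \<in> ?B then ?c ! card {j'\<in>?B. j'<j} else 0"
  have nz: "\<And>j. j \<in> ?B \<Longrightarrow> ?f j \<noteq> 0"
  proof -
    fix j assume "j \<in> ?B"
    then have "?c ! card {j'\<in>?B. j'<j} \<in> set ?c" using rank_lt nth_mem by blast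
    then show "?f j \<noteq> 0" using comp_nz \<open>j \<in> ?B\<close> by simp
  qed
  have T: "transport n \<sigma> \<nu> = map ?f [0..<n]"
    unfolding transport_def Let_def supp_def by simp
  show ?thesis
  proof (rule set_eqI)
    fix j
    show "j \<in> supp n (transport n \<sigma> \<nu>) \<longleftrightarrow> j \<in> ?B"
    proof
      assume "j \<in> supp n (transport n \<sigma> \<nu>)"
      then have "j \<in> supp n (map ?f [0..<n])" by (simp only: T)
      then have "j < n \<and> map ?f [0..<n] ! j \<noteq> 0" unfolding supp_def[of n "map ?f [0..<n]"] by blast
      then have jn: "j < n" and "map ?f [0..<n] ! j \<noteq> 0" by blast+
      moreover have "map ?f [0..<n] ! j = ?f j" using jn by (simp del: nth_map_upt add: nth_map)
      ultimately have "?f j \<noteq> 0" by simp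
      then show "j \<in> ?B" by (cases "j \<in> ?B") auto
    next
      assume "j \<in> ?B"
      then have "j < n" using into by auto
      moreover have "map ?f [0..<n] ! j = ?f j" using \<open>j < n\<close> by (simp del: nth_map_upt add: nth_map)
      ultimately have "j \<in> supp n (map ?f [0..<n])" using nz[OF \<open>j \<in> ?B\<close>]
        unfolding supp_def[of n "map ?f [0..<n]"] by simp
      then show "j \<in> supp n (transport n \<sigma> \<nu>)" by (simp only: T)
    qed
  qed
qed

lemma transport_comp: "comp_of (transport n \<sigma> \<nu>) = comp_of \<nu>"
proof -
  let ?B = "\<sigma> ` supp n \<nu>" and ?c = "comp_of \<nu>"
  let ?f = "\<lambda>j. if j \<in> ?B then ?c ! card {j'\<in>?B. j'<j} else 0"
  have nz: "\<And>j. j \<in> ?B \<Longrightarrow> ?f j \<noteq> 0"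
  proof -
    fix j assume "j \<in> ?B"
    then have "?c ! card {j'\<in>?B. j'<j} \<in> set ?c" using rank_lt nth_mem by blast
    then show "?f j \<noteq> 0" using comp_nz \<open>j \<in> ?B\<close> by simp
  qed
  have "comp_of (transport n \<sigma> \<nu>) = map ?f (filter ((\<lambda>k. k \<noteq> 0) \<circ> ?f) [0..<n])"
  proof -
    have T: "transport n \<sigma> \<nu> = map ?f [0..<n]"
      unfolding transport_def Let_def supp_def by simp
    show ?thesis unfolding T comp_of_def[of "map _ _"] filter_map by simp
  qed
  also have "filter ((\<lambda>k. k \<noteq> 0) \<circ> ?f) [0..<n] = filter (\<lambda>j. j \<in> ?B) [0..<n]"
    using nz by (intro filter_cong) auto
  also have "map ?f (filter (\<lambda>j. j \<in> ?B) [0..<n]) =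
      map (nth ?c) (map (\<lambda>j. card {j'\<in>?B. j'<j}) (filter (\<lambda>j. j \<in> ?B) [0..<n]))"
    by simp
  also have "\<dots> = map (nth ?c) [0..<card {j\<in>?B. j<n}]" by (simp only: rank_enum)
  also have "{j\<in>?B. j<n} = ?B" using into by auto
  also have "map (nth ?c) [0..<card ?B] = ?c" using cardB by (simp add: map_nth)
  finally show ?thesis .
qed
end

lemma determ:
  "length \<nu> = length \<mu> \<Longrightarrow> supp (length \<nu>) \<nu> = supp (length \<mu>) \<mu> \<Longrightarrow> comp_of \<nu> = comp_of \<mu> \<Longrightarrow> \<nu> = \<mu>"
proof (induction \<nu> \<mu> rule: list_induct2)
  case Nil then show ?case by simp
next
  case (Cons x xs y ys)
  have a1: "(0 \<in> supp (length (x#xs)) (x#xs)) = (x \<noteq> 0)" unfolding supp_def by simp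
  have a2: "(0 \<in> supp (length (y#ys)) (y#ys)) = (y \<noteq> 0)" unfolding supp_def by simp
  have s0: "(x = 0) = (y = 0)" using a1 a2 Cons.prems(1) by blast
  have ss: "supp (length xs) xs = supp (length ys) ys"
  proof -
    have "\<And>i. i \<in> supp (length xs) xs \<longleftrightarrow> Suc i \<in> supp (length (x#xs)) (x#xs)"
      "\<And>i. i \<in> supp (length ys) ys \<longleftrightarrow> Suc i \<in> supp (length (y#ys)) (y#ys)"
      unfolding supp_def by auto
    note h = this
    show ?thesis
    proof (rule set_eqI)
      fix i show "i \<in> supp (length xs) xs \<longleftrightarrow> i \<in> supp (length ys) ys"
        using h(1)[of i] h(2)[of i] Cons.prems(1) by simp
    qed
  qed
  show ?case
  proof (cases "x = 0")
    case True
    then have "comp_of xs = comp_of ys" using s0 Cons.prems(2) by (simp add: comp_of_def)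
    then show ?thesis using Cons.IH ss True s0 by simp
  next
    case False
    then have "x = y \<and> comp_of xs = comp_of ys" using s0 Cons.prems(2) by (simp add: comp_of_def)
    then show ?thesis using Cons.IH ss by simp
  qed
qed

lemma supp_sub: "supp n \<nu> \<subseteq> {..<n}" unfolding supp_def by auto

lemma transport_cong: "(\<And>i. i < n \<Longrightarrow> \<sigma> i = \<sigma>' i) \<Longrightarrow> transport n \<sigma> \<nu> = transport n \<sigma>' \<nu>"
proof -
  assume h: "\<And>i. i < n \<Longrightarrow> \<sigma> i = \<sigma>' i"
  have e: "\<sigma> ` {i. i < n \<and> \<nu> ! i \<noteq> 0} = \<sigma>' ` {i. i < n \<and> \<nu> ! i \<noteq> 0}"
    by (rule image_cong[OF refl]) (simp add: h)
  show ?thesis unfolding transport_def Let_def e by (rule refl)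
qed

lemma transport_props:
  assumes "inj_on \<sigma> {..<n}" "\<sigma> ` {..<n} \<subseteq> {..<n}" "length \<nu> = n"
  shows "supp n (transport n \<sigma> \<nu>) = \<sigma> ` supp n \<nu>" "comp_of (transport n \<sigma> \<nu>) = comp_of \<nu>"
proof -
  have i: "inj_on \<sigma> (supp n \<nu>)" using assms(1) supp_sub inj_on_subset by blast
  have t: "\<sigma> ` supp n \<nu> \<subseteq> {..<n}" using assms(2) supp_sub by blast
  show "supp n (transport n \<sigma> \<nu>) = \<sigma> ` supp n \<nu>" using transport_supp[OF assms(3) i t] .
  show "comp_of (transport n \<sigma> \<nu>) = comp_of \<nu>" using transport_comp[OF assms(3) i t] .
qed

lemma transport_id: "length \<nu> = n \<Longrightarrow> transport n (\<lambda>i. i) \<nu> = \<nu>"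
proof -
  assume l: "length \<nu> = n"
  have i: "inj_on (\<lambda>i::nat. i) {..<n}" "(\<lambda>i::nat. i) ` {..<n} \<subseteq> {..<n}" by auto
  have s: "supp n (transport n (\<lambda>i. i) \<nu>) = supp n \<nu>" using transport_props(1)[OF i l] by simp
  have c: "comp_of (transport n (\<lambda>i. i) \<nu>) = comp_of \<nu>" using transport_props(2)[OF i l] .
  have l2: "length (transport n (\<lambda>i. i) \<nu>) = length \<nu>" using l by simp
  show ?thesis using determ[OF l2 _ c] s l l2 by metis
qed

lemma transport_inj:
  assumes "inj_on \<sigma> {..<n}" "\<sigma> ` {..<n} \<subseteq> {..<n}" "length \<nu> = n" "length \<nu>' = n"
    "transport n \<sigma> \<nu> = transport n \<sigma> \<nu>'"
  shows "\<nu> = \<nu>'"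
proof -
  have "\<sigma> ` supp n \<nu> = \<sigma> ` supp n \<nu>'"
    using transport_props(1)[OF assms(1,2,3)] transport_props(1)[OF assms(1,2,4)] assms(5) by simp
  then have "supp n \<nu> = supp n \<nu>'"
    using inj_on_image_eq_iff[OF assms(1) supp_sub supp_sub] by simp
  moreover have "comp_of \<nu> = comp_of \<nu>'"
    using transport_props(2)[OF assms(1,2,3)] transport_props(2)[OF assms(1,2,4)] assms(5) by simp
  ultimately show ?thesis using determ[of \<nu> \<nu>'] assms(3,4) by simp
qed

lemma transport_surj:
  assumes "bij_betw \<sigma> {..<n} {..<n}" "length \<mu> = n"
  shows "\<exists>\<nu>. length \<nu> = n \<and> transport n \<sigma> \<nu> = \<mu>"
proof -
  let ?\<tau> = "inv_into {..<n} \<sigma>"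
  have bt: "bij_betw ?\<tau> {..<n} {..<n}" using bij_betw_inv_into[OF assms(1)] .
  have it: "inj_on ?\<tau> {..<n}" "?\<tau> ` {..<n} \<subseteq> {..<n}" using bij_betw_imp_inj_on[OF bt] bij_betw_imp_surj_on[OF bt] by auto
  have isg: "inj_on \<sigma> {..<n}" "\<sigma> ` {..<n} \<subseteq> {..<n}" using bij_betw_imp_inj_on[OF assms(1)] bij_betw_imp_surj_on[OF assms(1)] by auto
  let ?\<nu> = "transport n ?\<tau> \<mu>"
  have l: "length ?\<nu> = n" by simp
  have "supp n (transport n \<sigma> ?\<nu>) = \<sigma> ` ?\<tau> ` supp n \<mu>"
    by (simp only: transport_props(1)[OF isg l] transport_props(1)[OF it assms(2)])
  also have "\<dots> = supp n \<mu>"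
  proof -
    have "\<And>j. j \<in> supp n \<mu> \<Longrightarrow> \<sigma> (?\<tau> j) = j"
    proof -
      fix j assume "j \<in> supp n \<mu>"
      then have "j \<in> {..<n}" using supp_sub by blast
      then show "\<sigma> (?\<tau> j) = j" by (rule bij_betw_inv_into_right[OF assms(1)])
    qed
    then have "(\<lambda>j. \<sigma> (?\<tau> j)) ` supp n \<mu> = (\<lambda>j. j) ` supp n \<mu>"
      by (intro image_cong) simp_all
    then show ?thesis by (simp add: image_image)
  qed
  finally have s: "supp n (transport n \<sigma> ?\<nu>) = supp n \<mu>" .
  have c: "comp_of (transport n \<sigma> ?\<nu>) = comp_of \<mu>"
    by (simp only: transport_props(2)[OF isg l] transport_props(2)[OF it assms(2)])
  have l2: "length (transport n \<sigma> ?\<nu>) = length \<mu>" using assms(2) by simp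
  have "transport n \<sigma> ?\<nu> = \<mu>"
    using determ[OF l2 _ c] s assms(2) l2 by metis
  then show ?thesis using l by blast
qed

lemma inG_row: assumes "in_G n m g" "i < n" shows "\<exists>!j. j < n \<and> g i j \<noteq> 0"
proof -
  have "\<forall>i<n. \<exists>!j. j < n \<and> g i j \<noteq> 0" using assms(1) unfolding in_G_def by (rule conjunct1[OF conjunct2])
  from this[rule_format, OF assms(2)] show ?thesis .
qed

lemma inG_col: assumes "in_G n m g" "j < n" shows "\<exists>!i. i < n \<and> g i j \<noteq> 0"
proof -
  have "\<forall>j<n. \<exists>!i. i < n \<and> g i j \<noteq> 0" using assms(1) unfolding in_G_def by (rule conjunct1[OF conjunct2[OF conjunct2]])
  from this[rule_format, OF assms(2)] show ?thesis .
qed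

lemma sigma_props:
  assumes "in_G n m g" "i < n"
  shows "sigma_g n g i < n \<and> g i (sigma_g n g i) \<noteq> 0"
proof -
  have "\<exists>!j. j < n \<and> g i j \<noteq> 0" using inG_row assms(1,2) by blast
  then show ?thesis unfolding sigma_g_def by (rule theI')
qed

lemma sigma_unique:
  assumes "in_G n m g" "i < n" "j < n" "g i j \<noteq> 0"
  shows "sigma_g n g i = j"
proof -
  have "\<exists>!j. j < n \<and> g i j \<noteq> 0" using inG_row assms(1,2) by blast
  then show ?thesis unfolding sigma_g_def by (rule the1_equality) (simp add: assms(3,4))
qed

lemma sigma_bij:
  assumes "in_G n m g"
  shows "bij_betw (sigma_g n g) {..<n} {..<n}"
proof -
  have sub: "sigma_g n g ` {..<n} \<subseteq> {..<n}" by (rule image_subsetI) (simp add: sigma_props[OF assms])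
  have inj: "inj_on (sigma_g n g) {..<n}"
  proof (rule inj_onI)
    fix i i' assume i: "i \<in> {..<n}" and i': "i' \<in> {..<n}" and e: "sigma_g n g i = sigma_g n g i'"
    let ?j = "sigma_g n g i"
    have il: "i < n" "i' < n" using i i' by simp_all
    have a: "?j < n \<and> g i ?j \<noteq> 0" using sigma_props[OF assms il(1)] .
    have b: "g i' ?j \<noteq> 0" using sigma_props[OF assms il(2)] e by simp
    have "\<exists>!k. k < n \<and> g k ?j \<noteq> 0" using inG_col[OF assms] a by blast
    then show "i = i'" using a b il by blast
  qed
  have "sigma_g n g ` {..<n} = {..<n}"
    using inj sub by (simp add: endo_inj_surj)
  then show ?thesis using inj unfolding bij_betw_def by blast
qed

lemma qs_len: "length \<mu> \<noteq> n \<Longrightarrow> qs_action n m g P \<mu> = 0"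
  unfolding qs_action_def by (rule sum.neutral) auto

lemma qs_at:
  assumes g: "in_G n m g" and P: "is_poly n P" and l: "length \<nu> = n"
  shows "qs_action n m g P (transport n (sigma_g n g) \<nu>) = w_g n g ^ cK m \<nu> * P \<nu>"
proof -
  have isg: "inj_on (sigma_g n g) {..<n}" "sigma_g n g ` {..<n} \<subseteq> {..<n}"
    using bij_betw_imp_inj_on[OF sigma_bij[OF g]] bij_betw_imp_surj_on[OF sigma_bij[OF g]] by auto
  have fin: "finite {\<nu>. P \<nu> \<noteq> 0}" using P is_poly_def by blast
  have "qs_action n m g P (transport n (sigma_g n g) \<nu>) =
     (\<Sum>\<nu>' \<in> {\<nu>. P \<nu> \<noteq> 0}. if \<nu>' = \<nu> then w_g n g ^ cK m \<nu>' * P \<nu>' else 0)"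
    unfolding qs_action_def
  proof (rule sum.cong)
    fix \<nu>' assume "\<nu>' \<in> {\<nu>. P \<nu> \<noteq> 0}"
    then have "length \<nu>' = n" using P is_poly_def by auto
    then have "(transport n (sigma_g n g) \<nu>' = transport n (sigma_g n g) \<nu>) = (\<nu>' = \<nu>)"
      using transport_inj[OF isg _ l] by blast
    then show "(if transport n (sigma_g n g) \<nu>' = transport n (sigma_g n g) \<nu> then w_g n g ^ cK m \<nu>' * P \<nu>' else 0) =
      (if \<nu>' = \<nu> then w_g n g ^ cK m \<nu>' * P \<nu>' else 0)" by simp
  qed simp
  also have "\<dots> = w_g n g ^ cK m \<nu> * P \<nu>"
    using fin by (simp add: sum.delta')
  finally show ?thesis .
qed


lemma zeta_facts:
  assumes "m \<ge> 2"
  shows "cis (2*pi/m) ^ m = 1" "cis (2*pi/m) \<noteq> 1" "cis (2*pi/m) \<noteq> 0"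
proof -
  show "cis (2*pi/m) ^ m = 1" using assms by (simp add: DeMoivre)
  have "pi / m < 2" using assms pi_less_4 by (simp add: divide_less_eq)
  moreover have "0 < pi / m" using assms by simp
  ultimately have "cos (2 * (pi/m)) < 1" by (rule cos_double_less_one[rotated])
  then have r: "Re (cis (2*pi/m)) \<noteq> 1" by simp
  show "cis (2*pi/m) \<noteq> 1"
  proof
    assume "cis (2*pi/m) = 1"
    then have "Re (cis (2*pi/m)) = 1" by simp
    with r show False by simp
  qed
  show "cis (2*pi/m) \<noteq> 0" by simp
qed

lemma alldvd_comp: "(\<forall>k\<in>set \<nu>. m dvd k) \<longleftrightarrow> (\<forall>k\<in>set (comp_of \<nu>). m dvd k)"
  unfolding comp_of_def by (auto, metis dvd_0_right neq0_conv)

lemma comp_div: "m \<ge> 1 \<Longrightarrow> \<forall>k\<in>set \<nu>. m dvd k \<Longrightarrow>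
   comp_of (map (\<lambda>k. k div m) \<nu>) = map (\<lambda>k. k div m) (comp_of \<nu>)"
  by (induction \<nu>) (auto simp: comp_of_def elim!: dvdE)

lemma comp_mult: "m \<ge> 1 \<Longrightarrow> comp_of (map (\<lambda>k. m * k) \<kappa>) = map (\<lambda>k. m * k) (comp_of \<kappa>)"
  by (induction \<kappa>) (auto simp: comp_of_def)

theorem mainTheorem2:
  fixes n m :: nat and P :: "nat list \<Rightarrow> complex"
  assumes "n \<ge> 1" and "m \<ge> 1" and "is_poly n P"
  shows "(\<forall>g. in_G n m g \<longrightarrow> qs_action n m g P = P) \<longleftrightarrow>
         (\<exists>Q. is_poly n Q \<and> quasi_symmetric n Q \<and> subst_pow n m P Q)"
proof
  assume inv: "\<forall>g. in_G n m g \<longrightarrow> qs_action n m g P = P"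
  have lenP: "\<And>\<nu>. P \<nu> \<noteq> 0 \<Longrightarrow> length \<nu> = n" using assms(3) is_poly_def by blast
  have finP: "finite {\<nu>. P \<nu> \<noteq> 0}" using assms(3) is_poly_def by blast
  have dv: "\<And>\<nu>. P \<nu> \<noteq> 0 \<Longrightarrow> \<forall>k\<in>set \<nu>. m dvd k"
  proof -
    fix \<nu> assume P\<nu>: "P \<nu> \<noteq> 0"
    show "\<forall>k\<in>set \<nu>. m dvd k"
    proof (cases "m = 1")
      case True then show ?thesis by simp
    next
      case False
      then have m2: "m \<ge> 2" using assms(2) by simp
      define \<zeta> where "\<zeta> = cis (2*pi/m)"
      note zf = zeta_facts[OF m2, folded \<zeta>_def]
      define gd where "gd = (\<lambda>i j. if i < n \<and> j = i then (if i = 0 then \<zeta> else (1::complex)) else 0)"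
      have G: "in_G n m gd" unfolding in_G_def
      proof (intro conjI allI impI)
        fix i j assume "n \<le> i \<or> n \<le> j" then show "gd i j = 0" unfolding gd_def by auto
      next
        fix i assume i: "i < n"
        have "gd i i \<noteq> 0" using i zf(3) unfolding gd_def by simp
        moreover have "\<And>j. gd i j \<noteq> 0 \<Longrightarrow> j = i" unfolding gd_def by (simp split: if_splits)
        ultimately show "\<exists>!j. j < n \<and> gd i j \<noteq> 0" using i by (intro ex1I[of _ i]) blast+
      next
        fix j assume j: "j < n"
        have "gd j j \<noteq> 0" using j zf(3) unfolding gd_def by simp
        moreover have "\<And>i. gd i j \<noteq> 0 \<Longrightarrow> i = j" unfolding gd_def by (simp split: if_splits)
        ultimately show "\<exists>!i. i < n \<and> gd i j \<noteq> 0" using j by (intro ex1I[of _ j]) blast+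
      next
        fix i j assume "i < n" "j < n" "gd i j \<noteq> 0"
        then show "gd i j ^ m = 1" using zf(1) unfolding gd_def by (simp split: if_splits)
      qed
      have sig: "\<And>i. i < n \<Longrightarrow> sigma_g n gd i = i"
      proof -
        fix i assume i: "i < n"
        have "gd i i \<noteq> 0" using i zf(3) unfolding gd_def by simp
        then show "sigma_g n gd i = i" by (rule sigma_unique[OF G i i])
      qed
      have w: "w_g n gd = \<zeta>"
      proof -
        have gs: "\<And>i. i < n \<Longrightarrow> gd i (sigma_g n gd i) = (if i = 0 then \<zeta> else 1)"
        proof -
          fix i assume i: "i < n"
          have "gd i (sigma_g n gd i) = gd i i" using sig[OF i] by simp
          then show "gd i (sigma_g n gd i) = (if i = 0 then \<zeta> else 1)" using i unfolding gd_def by simp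
        qed
        have "w_g n gd = (\<Prod>i<n. if i = 0 then \<zeta> else 1)"
          unfolding w_g_def by (rule prod.cong) (simp_all add: gs)
        also have "\<dots> = \<zeta>" using assms(1) by (simp add: prod.delta)
        finally show ?thesis .
      qed
      have l: "length \<nu> = n" using lenP P\<nu> .
      have tr: "transport n (sigma_g n gd) \<nu> = \<nu>"
        using transport_cong[of n "sigma_g n gd" "\<lambda>i. i"] sig transport_id[OF l] by simp
      have "P \<nu> = \<zeta> ^ cK m \<nu> * P \<nu>"
        using qs_at[OF G assms(3) l] inv G tr w by simp
      then have "\<zeta> ^ cK m \<nu> = 1" using P\<nu> by simp
      then have "cK m \<nu> = 0" using zf(2) unfolding cK_def by (auto split: if_splits)
      then have "\<forall>k\<in>set (comp_of \<nu>). m dvd k" unfolding cK_def by (simp split: if_splits)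
      then show ?thesis using alldvd_comp[of \<nu> m] by simp
    qed
  qed
  have qsP: "\<And>\<nu> \<mu>. length \<nu> = n \<Longrightarrow> length \<mu> = n \<Longrightarrow> comp_of \<nu> = comp_of \<mu> \<Longrightarrow> P \<nu> = P \<mu>"
  proof -
    fix \<nu> \<mu> :: "nat list"
    assume l\<nu>: "length \<nu> = n" and l\<mu>: "length \<mu> = n" and c: "comp_of \<nu> = comp_of \<mu>"
    let ?S = "supp n \<nu>" and ?T = "supp n \<mu>"
    have cST: "card ?S = card ?T" using len_comp[of \<nu>] len_comp[of \<mu>] l\<nu> l\<mu> c by simp
    have finS: "finite ?S" "finite ?T" using supp_sub finite_subset by blast+
    obtain f where f: "bij_betw f ?S ?T" using finite_same_card_bij[OF finS cST] by blast
    have cD: "card ({..<n} - ?S) = card ({..<n} - ?T)"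
      using cST supp_sub finS by (simp add: card_Diff_subset)
    obtain h where h: "bij_betw h ({..<n} - ?S) ({..<n} - ?T)"
      using finite_same_card_bij[OF _ _ cD] by blast
    define \<pi> where "\<pi> = (\<lambda>i. if i \<in> ?S then f i else h i)"
    have b1: "bij_betw \<pi> ?S ?T" using f unfolding \<pi>_def by (rule bij_betw_cong[THEN iffD1, rotated]) simp
    have b2: "bij_betw \<pi> ({..<n} - ?S) ({..<n} - ?T)" using h unfolding \<pi>_def
      by (rule bij_betw_cong[THEN iffD1, rotated]) simp
    have "bij_betw \<pi> (?S \<union> ({..<n} - ?S)) (?T \<union> ({..<n} - ?T))"
      by (rule bij_betw_combine[OF b1 b2]) blast
    moreover have "?S \<union> ({..<n} - ?S) = {..<n}" "?T \<union> ({..<n} - ?T) = {..<n}" using supp_sub by blast+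
    ultimately have b: "bij_betw \<pi> {..<n} {..<n}" by simp
    have \<pi>S: "\<pi> ` ?S = ?T" using bij_betw_imp_surj_on[OF b1] .
    have \<pi>lt: "\<And>i. i < n \<Longrightarrow> \<pi> i < n" using b bij_betwE by blast
    define gp where "gp = (\<lambda>i j. if i < n \<and> j < n \<and> j = \<pi> i then (1::complex) else 0)"
    have G: "in_G n m gp" unfolding in_G_def
    proof (intro conjI allI impI)
      fix i j assume "n \<le> i \<or> n \<le> j" then show "gp i j = 0" unfolding gp_def by auto
    next
      fix i assume "i < n" then show "\<exists>!j. j < n \<and> gp i j \<noteq> 0" unfolding gp_def using \<pi>lt by auto
    next
      fix j assume j: "j < n"
      then obtain i where i: "i < n" "\<pi> i = j" using bij_betw_imp_surj_on[OF b] by (metis imageE lessThan_iff)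
      have "\<And>i'. i' < n \<Longrightarrow> \<pi> i' = j \<Longrightarrow> i' = i" using bij_betw_imp_inj_on[OF b] i unfolding inj_on_def by auto
      then have uq: "\<And>i'. i' < n \<Longrightarrow> \<pi> i' = j \<Longrightarrow> i' = i" .
      show "\<exists>!i. i < n \<and> gp i j \<noteq> 0"
      proof (rule ex1I[of _ i])
        show "i < n \<and> gp i j \<noteq> 0" using i j unfolding gp_def by simp
      next
        fix i' assume "i' < n \<and> gp i' j \<noteq> 0"
        then have "i' < n" "\<pi> i' = j" unfolding gp_def by (auto split: if_splits)
        then show "i' = i" using uq by blast
      qed
    next
      fix i j assume "i < n" "j < n" "gp i j \<noteq> 0" then show "gp i j ^ m = 1" unfolding gp_def by (auto split: if_splits)
    qed
    have sig: "\<And>i. i < n \<Longrightarrow> sigma_g n gp i = \<pi> i"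
    proof -
      fix i assume i: "i < n"
      have "gp i (\<pi> i) \<noteq> 0" using i \<pi>lt[OF i] unfolding gp_def by simp
      then show "sigma_g n gp i = \<pi> i" by (rule sigma_unique[OF G i \<pi>lt[OF i]])
    qed
    have gs: "\<And>i. i < n \<Longrightarrow> gp i (sigma_g n gp i) = 1"
    proof -
      fix i assume i: "i < n"
      have "gp i (sigma_g n gp i) = gp i (\<pi> i)" using sig[OF i] by simp
      then show "gp i (sigma_g n gp i) = 1" using i \<pi>lt[OF i] unfolding gp_def by simp
    qed
    have w: "w_g n gp = 1" unfolding w_g_def by (rule prod.neutral) (simp add: gs)
    have ip: "inj_on \<pi> {..<n}" "\<pi> ` {..<n} \<subseteq> {..<n}" using bij_betw_imp_inj_on[OF b] bij_betw_imp_surj_on[OF b] by auto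
    have "transport n \<pi> \<nu> = \<mu>"
      using determ[of "transport n \<pi> \<nu>" \<mu>] transport_props[OF ip l\<nu>] \<pi>S c l\<mu> by simp
    then have tr: "transport n (sigma_g n gp) \<nu> = \<mu>" using transport_cong[of n "sigma_g n gp" \<pi>] sig by simp
    show "P \<nu> = P \<mu>" using qs_at[OF G assms(3) l\<nu>] inv G tr w by simp
  qed
  define Q where "Q = (\<lambda>\<kappa>::nat list. if length \<kappa> = n then P (map (\<lambda>k. m * k) \<kappa>) else 0)"
  have "is_poly n Q"
  proof -
    have "{\<kappa>. Q \<kappa> \<noteq> 0} \<subseteq> (map (\<lambda>k. k div m)) ` {\<nu>. P \<nu> \<noteq> 0}"
    proof
      fix \<kappa> assume "\<kappa> \<in> {\<kappa>. Q \<kappa> \<noteq> 0}"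
      then have "P (map (\<lambda>k. m * k) \<kappa>) \<noteq> 0" unfolding Q_def by (auto split: if_splits)
      moreover have "\<kappa> = map (\<lambda>k. k div m) (map (\<lambda>k. m * k) \<kappa>)" using assms(2) by (simp add: map_idI)
      ultimately show "\<kappa> \<in> (map (\<lambda>k. k div m)) ` {\<nu>. P \<nu> \<noteq> 0}" by blast
    qed
    then have "finite {\<kappa>. Q \<kappa> \<noteq> 0}" using finite_subset finite_imageI[OF finP] by blast
    moreover have "\<forall>\<kappa>. Q \<kappa> \<noteq> 0 \<longrightarrow> length \<kappa> = n" unfolding Q_def by simp
    ultimately show ?thesis unfolding is_poly_def by blast
  qed
  moreover have "quasi_symmetric n Q"
    unfolding quasi_symmetric_def Q_def using qsP comp_mult[OF assms(2)] by simp
  moreover have "subst_pow n m P Q"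
    unfolding subst_pow_def
  proof (intro allI impI)
    fix \<nu> :: "nat list" assume l: "length \<nu> = n"
    show "P \<nu> = (if \<forall>k\<in>set \<nu>. m dvd k then Q (map (\<lambda>k. k div m) \<nu>) else 0)"
    proof (cases "\<forall>k\<in>set \<nu>. m dvd k")
      case True
      then have "map (\<lambda>k. m * (k div m)) \<nu> = \<nu>" by (simp add: map_idI)
      then show ?thesis using True l unfolding Q_def by (simp add: comp_def)
    next
      case False then show ?thesis using dv by auto
    qed
  qed
  ultimately show "\<exists>Q. is_poly n Q \<and> quasi_symmetric n Q \<and> subst_pow n m P Q" by blast
next
  assume "\<exists>Q. is_poly n Q \<and> quasi_symmetric n Q \<and> subst_pow n m P Q"
  then obtain Q where Qq: "quasi_symmetric n Q" and sp: "subst_pow n m P Q" by blast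
  have lenP: "\<And>\<nu>. P \<nu> \<noteq> 0 \<Longrightarrow> length \<nu> = n" using assms(3) unfolding is_poly_def by blast
  have spr: "\<And>\<nu>. length \<nu> = n \<Longrightarrow> P \<nu> = (if \<forall>k\<in>set \<nu>. m dvd k then Q (map (\<lambda>k. k div m) \<nu>) else 0)"
    using sp unfolding subst_pow_def by blast
  have dv: "\<And>\<nu>. P \<nu> \<noteq> 0 \<Longrightarrow> \<forall>k\<in>set \<nu>. m dvd k"
  proof -
    fix \<nu> assume h: "P \<nu> \<noteq> 0"
    then have "P \<nu> = (if \<forall>k\<in>set \<nu>. m dvd k then Q (map (\<lambda>k. k div m) \<nu>) else 0)"
      using spr lenP by blast
    then show "\<forall>k\<in>set \<nu>. m dvd k" using h by (cases "\<forall>k\<in>set \<nu>. m dvd k") simp_all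
  qed
  have Qr: "\<And>a b. length a = n \<Longrightarrow> length b = n \<Longrightarrow> comp_of a = comp_of b \<Longrightarrow> Q a = Q b"
    using Qq unfolding quasi_symmetric_def by blast
  have qsP: "\<And>\<nu> \<mu>. length \<nu> = n \<Longrightarrow> length \<mu> = n \<Longrightarrow> comp_of \<nu> = comp_of \<mu> \<Longrightarrow> P \<nu> = P \<mu>"
  proof -
    fix \<nu> \<mu> :: "nat list"
    assume l\<nu>: "length \<nu> = n" and l\<mu>: "length \<mu> = n" and c: "comp_of \<nu> = comp_of \<mu>"
    have e: "(\<forall>k\<in>set \<nu>. m dvd k) = (\<forall>k\<in>set \<mu>. m dvd k)"
      using alldvd_comp[of \<nu> m] alldvd_comp[of \<mu> m] c by simp
    show "P \<nu> = P \<mu>"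
    proof (cases "\<forall>k\<in>set \<nu>. m dvd k")
      case True
      have T2: "\<forall>k\<in>set \<mu>. m dvd k" using True e by simp
      have "comp_of (map (\<lambda>k. k div m) \<nu>) = comp_of (map (\<lambda>k. k div m) \<mu>)"
        using comp_div[OF assms(2) True] comp_div[OF assms(2) T2] c by simp
      then have "Q (map (\<lambda>k. k div m) \<nu>) = Q (map (\<lambda>k. k div m) \<mu>)"
        using Qr l\<nu> l\<mu> by simp
      then show ?thesis using spr[OF l\<nu>] spr[OF l\<mu>] True T2 by simp
    next
      case False
      then have F2: "\<not> (\<forall>k\<in>set \<mu>. m dvd k)" using e by simp
      show ?thesis using spr[OF l\<nu>] spr[OF l\<mu>] False F2 by simp
    qed
  qed
  show "\<forall>g. in_G n m g \<longrightarrow> qs_action n m g P = P"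
  proof (intro allI impI ext)
    fix g \<mu> assume G: "in_G n m g"
    show "qs_action n m g P \<mu> = P \<mu>"
    proof (cases "length \<mu> = n")
      case False
      then have "qs_action n m g P \<mu> = 0" by (rule qs_len)
      moreover have "P \<mu> = 0" using lenP False by blast
      ultimately show ?thesis by simp
    next
      case True
      obtain \<nu> where l: "length \<nu> = n" and t: "transport n (sigma_g n g) \<nu> = \<mu>"
        using transport_surj[OF sigma_bij[OF G] True] by blast
      have isg: "inj_on (sigma_g n g) {..<n}" "sigma_g n g ` {..<n} \<subseteq> {..<n}"
        using bij_betw_imp_inj_on[OF sigma_bij[OF G]] bij_betw_imp_surj_on[OF sigma_bij[OF G]] by auto
      have eq: "P \<nu> = P \<mu>" using qsP[OF l True] transport_props(2)[OF isg l] t by simp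
      have "w_g n g ^ cK m \<nu> * P \<nu> = P \<nu>"
      proof (cases "P \<nu> = 0")
        case False
        then have "\<forall>k\<in>set \<nu>. m dvd k" by (rule dv)
        then have "\<forall>k\<in>set (comp_of \<nu>). m dvd k" using alldvd_comp[of \<nu> m] by simp
        then have "cK m \<nu> = 0" unfolding cK_def by simp
        then show ?thesis by simp
      qed simp
      then show ?thesis using qs_at[OF G assms(3) l] t eq by simp
    qed
  qed
qed

end
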